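(* Let $T$ be a $3$-CET with exactly one flip, with domain $S^1\setminus\{a_0,a_1,a_2\}$ where $0=a_0<a_1<a_2<a_3=1$ and $I_i=(a_{i-1},a_i)$, $i=1,2,3$, such that $I_1$ is the flip of $T$ and $T(I_1)<T(I_3)<T(I_2)$ in the cyclic order. Assume that $T$ has no periodic points. Then there exists $N\ge 2$ such that $T^n(I_1)\cap I_1=\emptyset$ for all $1\le n\le N-1$ and $T^N(I_1)\cap I_1\neq\emptyset$. Furthermore, the sets $T^n(I_1)$, $0\le n\le N-1$, are pairwise disjoint.
   Context: $S^1=[0,1]/(0\sim1)$ with orientation induced by $[0,1]$ and points written as points of $[0,1]$. A $3$-CET is an injective map $T:I_1\cup I_2\cup I_3\to S^1$, where $I_1,I_2,I_3$ are pairwise disjoint open subintervals whose closures cover $S^1$, which is an isometry on each $I_i$ and cannot be continuously extended to a larger open set. A flip is an $I_i$ on which $T$ reverses orientation. For a set $J$, $T^n(J)=\{T^n(x): x\in J\cap \mathrm{Dom}(T^n)\}$. For subintervals $J_1,J_2,J_3$ of $S^1$, $J_1<J_2<J_3$ means every triple $(x_1,x_2,x_3)\in J_1\times J_2\times J_3$ is cyclically ordered. A periodic point is $p$ with $T^m(p)=p$ for some $m\ge1$. *)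

theory Defs
  imports "HOL-Analysis.Analysis"
begin

text \<open>The circle S^1 = [0,1]/(0~1) is represented by points of [0,1) (reals);
  the projection to a point of the circle is frac.  For topological notions we
  use the embedding circ x = cis (2 pi x) into the unit circle of the complex plane.\<close>

definition circ :: "real \<Rightarrow> complex" where
  "circ x = cis (2 * pi * x)"

definition cyc :: "real \<Rightarrow> real \<Rightarrow> real \<Rightarrow> bool" where
  "cyc x y z \<longleftrightarrow> (x < y \<and> y < z) \<or> (y < z \<and> z < x) \<or> (z < x \<and> x < y)"

definition cyc_sets :: "real set \<Rightarrow> real set \<Rightarrow> real set \<Rightarrow> bool" where
  "cyc_sets A B C \<longleftrightarrow> (\<forall>x\<in>A. \<forall>y\<in>B. \<forall>z\<in>C. cyc x y z)"

definition cet_dom :: "real \<Rightarrow> real \<Rightarrow> real set" where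
  "cet_dom a1 a2 = {0<..<a1} \<union> {a1<..<a2} \<union> {a2<..<1}"

definition cet3_flip1 :: "(real \<Rightarrow> real) \<Rightarrow> real \<Rightarrow> real \<Rightarrow> bool" where
  "cet3_flip1 T a1 a2 \<longleftrightarrow>
     0 < a1 \<and> a1 < a2 \<and> a2 < 1 \<and>
     (\<exists>c1. \<forall>x\<in>{0<..<a1}. T x = frac (c1 - x)) \<and>
     (\<exists>c2. \<forall>x\<in>{a1<..<a2}. T x = frac (x + c2)) \<and>
     (\<exists>c3. \<forall>x\<in>{a2<..<1}. T x = frac (x + c3)) \<and>
     inj_on T (cet_dom a1 a2) \<and>
     \<not> (\<exists>U g. openin (top_of_set (sphere 0 1)) U \<and> circ ` cet_dom a1 a2 \<subset> U \<and>
            continuous_on U g \<and> g ` U \<subseteq> sphere 0 1 \<and>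
            (\<forall>x\<in>cet_dom a1 a2. g (circ x) = circ (T x)))"

definition iter_dom :: "(real \<Rightarrow> real) \<Rightarrow> real set \<Rightarrow> nat \<Rightarrow> real set" where
  "iter_dom T D n = {x. \<forall>k<n. (T ^^ k) x \<in> D}"

definition iter_img :: "(real \<Rightarrow> real) \<Rightarrow> real set \<Rightarrow> nat \<Rightarrow> real set \<Rightarrow> real set" where
  "iter_img T D n J = (T ^^ n) ` (J \<inter> iter_dom T D n)"

definition has_periodic_point :: "(real \<Rightarrow> real) \<Rightarrow> real set \<Rightarrow> bool" where
  "has_periodic_point T D \<longleftrightarrow> (\<exists>p m. m \<ge> 1 \<and> p \<in> iter_dom T D m \<and> (T ^^ m) p = p)"

end

theory Submission imports Defs begin

lemma affine_img:
  fixes s t :: real and B :: "real set"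
  assumes "\<bar>s\<bar> = 1" and B: "B \<in> sets lborel"
  shows "(\<lambda>x. s * x + t) ` B \<in> sets lborel \<and> emeasure lborel ((\<lambda>x. s * x + t) ` B) = emeasure lborel B"
proof -
  have s0: "s \<noteq> 0" using assms by auto
  have img: "(\<lambda>x. s * x + t) ` B = (\<lambda>y. (y - t) / s) -` B"
  proof
    show "(\<lambda>x. s * x + t) ` B \<subseteq> (\<lambda>y. (y - t) / s) -` B" using s0 by auto
    show "(\<lambda>y. (y - t) / s) -` B \<subseteq> (\<lambda>x. s * x + t) ` B"
    proof
      fix y assume "y \<in> (\<lambda>y. (y - t) / s) -` B"
      then have "(y - t)/s \<in> B" by simp
      moreover have "y = s * ((y - t)/s) + t" using s0 by simp
      ultimately show "y \<in> (\<lambda>x. s * x + t) ` B" by blast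
    qed
  qed
  have m: "(\<lambda>y. (y - t) / s) \<in> borel_measurable borel" by measurable
  have meas: "(\<lambda>x. s * x + t) ` B \<in> sets lborel"
    unfolding img using measurable_sets[OF m, of B] B by simp
  have "emeasure lborel ((\<lambda>x. s * x + t) ` B)
     = emeasure (density (distr lborel borel (\<lambda>x. t + s * x)) (\<lambda>_. ennreal \<bar>s\<bar>)) ((\<lambda>x. s * x + t) ` B)"
    using lborel_real_affine[OF s0, of t] by simp
  also have "\<dots> = emeasure (distr lborel borel (\<lambda>x. t + s * x)) ((\<lambda>x. s * x + t) ` B)"
    using assms(1) meas by (simp add: emeasure_density_const)
  also have "\<dots> = emeasure lborel ((\<lambda>x. t + s * x) -` ((\<lambda>x. s * x + t) ` B))"
    using meas by (subst emeasure_distr) auto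
  also have "(\<lambda>x. t + s * x) -` ((\<lambda>x. s * x + t) ` B) = B" using s0 by (auto simp: add.commute)
  finally show ?thesis using meas by simp
qed

lemma pieces_img:
  fixes f :: "real \<Rightarrow> real" and P :: "'i::countable \<Rightarrow> real set"
  assumes P: "\<And>i. P i \<in> sets lborel" and disj: "disjoint_family P"
    and A: "A \<in> sets lborel" and cov: "A \<subseteq> (\<Union>i. P i)" and inj: "inj_on f A"
    and aff: "\<And>i x. x \<in> P i \<Longrightarrow> f x = s i * x + t i" and s: "\<And>i. \<bar>s i\<bar> = 1"
  shows "f ` A \<in> sets lborel \<and> emeasure lborel (f ` A) = emeasure lborel A"
proof -
  define X where "X i = A \<inter> P i" for i
  define Y where "Y i = (\<lambda>x. s i * x + t i) ` X i" for i
  have XS: "X i \<in> sets lborel" for i unfolding X_def using A P by auto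
  have YS: "Y i \<in> sets lborel" and YM: "emeasure lborel (Y i) = emeasure lborel (X i)" for i
    using affine_img[OF s XS] unfolding Y_def by auto
  have Aeq: "A = \<Union>(X ` UNIV)" unfolding X_def using cov by auto
  have Yf: "Y i = f ` X i" for i unfolding Y_def X_def using aff by (force simp: image_def)
  have fAeq: "f ` A = \<Union>(Y ` UNIV)" unfolding Yf by (subst Aeq) auto
  have dX: "disjoint_family X" using disj unfolding X_def disjoint_family_on_def by auto
  have dY: "disjoint_family Y"
    unfolding disjoint_family_on_def
  proof (intro ballI impI)
    fix i j :: 'i assume "i \<noteq> j"
    show "Y i \<inter> Y j = {}"
    proof (rule ccontr)
      assume "Y i \<inter> Y j \<noteq> {}"
      then obtain x y where x: "x \<in> X i" and y: "y \<in> X j" and e: "f x = f y"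
        unfolding Yf by blast
      have "x \<in> A" "y \<in> A" using x y unfolding X_def by auto
      then have "x = y" using inj e by (simp add: inj_on_def)
      then show False using x y dX \<open>i \<noteq> j\<close> unfolding disjoint_family_on_def by blast
    qed
  qed
  have "emeasure lborel (f ` A) = (\<integral>\<^sup>+i. emeasure lborel (Y i) \<partial>count_space UNIV)"
    unfolding fAeq by (rule emeasure_UN_countable) (use YS dY in auto)
  also have "\<dots> = (\<integral>\<^sup>+i. emeasure lborel (X i) \<partial>count_space UNIV)" by (simp add: YM)
  also have "\<dots> = emeasure lborel A"
    by (subst Aeq, rule emeasure_UN_countable[symmetric]) (use XS dX in auto)
  finally show ?thesis using fAeq YS by auto
qed

lemma T_meas:
  assumes cet: "cet3_flip1 T a1 a2" and B: "B \<in> sets lborel" and BD: "B \<subseteq> cet_dom a1 a2"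
  shows "T ` B \<in> sets lborel \<and> emeasure lborel (T ` B) = emeasure lborel B"
proof -
  have ord: "0 < a1" "a1 < a2" "a2 < 1" and inj: "inj_on T (cet_dom a1 a2)"
    using cet unfolding cet3_flip1_def by auto
  have "\<exists>c1. \<forall>x\<in>{0<..<a1}. T x = frac (c1 - x)" using cet unfolding cet3_flip1_def by auto
  then obtain c1 where h1: "\<forall>x\<in>{0<..<a1}. T x = frac (c1 - x)" by blast
  have "\<exists>c2. \<forall>x\<in>{a1<..<a2}. T x = frac (x + c2)" using cet unfolding cet3_flip1_def by auto
  then obtain c2 where h2: "\<forall>x\<in>{a1<..<a2}. T x = frac (x + c2)" by blast
  have "\<exists>c3. \<forall>x\<in>{a2<..<1}. T x = frac (x + c3)" using cet unfolding cet3_flip1_def by auto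
  then obtain c3 where h3: "\<forall>x\<in>{a2<..<1}. T x = frac (x + c3)" by blast
  define P :: "nat \<times> int \<Rightarrow> real set" where
    "P = (\<lambda>(j,k). if j = 1 then {0<..<a1} \<inter> {c1 - of_int k - 1<..c1 - of_int k}
           else if j = 2 then {a1<..<a2} \<inter> {of_int k - c2..<of_int k + 1 - c2}
           else if j = 3 then {a2<..<1} \<inter> {of_int k - c3..<of_int k + 1 - c3} else {})"
  define s :: "nat \<times> int \<Rightarrow> real" where "s = (\<lambda>(j,k). if j = 1 then -1 else 1)"
  define t :: "nat \<times> int \<Rightarrow> real" where
    "t = (\<lambda>(j,k). if j = 1 then c1 - of_int k else if j = 2 then c2 - of_int k else c3 - of_int k)"
  have P1: "x \<in> P (1,k) \<longleftrightarrow> x \<in> {0<..<a1} \<and> floor (c1 - x) = k" for x k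
    unfolding P_def by (auto simp: floor_eq_iff)
  have P2: "x \<in> P (2,k) \<longleftrightarrow> x \<in> {a1<..<a2} \<and> floor (x + c2) = k" for x k
    unfolding P_def by (auto simp: floor_eq_iff)
  have P3: "x \<in> P (3,k) \<longleftrightarrow> x \<in> {a2<..<1} \<and> floor (x + c3) = k" for x k
    unfolding P_def by (auto simp: floor_eq_iff)
  have Pj: "x \<in> P (j,k) \<Longrightarrow> j = 1 \<or> j = 2 \<or> j = 3" for x j k
    unfolding P_def by (auto split: if_splits)
  have key: "x \<in> P (j,k) \<Longrightarrow> (j=1 \<and> 0<x \<and> x<a1 \<and> floor(c1-x)=k) \<or> (j=2 \<and> a1<x \<and> x<a2 \<and> floor(x+c2)=k) \<or> (j=3 \<and> a2<x \<and> x<1 \<and> floor(x+c3)=k)" for x j k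
  proof -
    assume a: "x \<in> P (j,k)"
    then have "j = 1 \<or> j = 2 \<or> j = 3" using Pj by blast
    then show ?thesis using a P1 P2 P3 by (elim disjE) auto
  qed
  show ?thesis
  proof (rule pieces_img[where P=P and s=s and t=t])
    show "P i \<in> sets lborel" for i unfolding P_def by (auto split: prod.splits)
    show "disjoint_family P"
      unfolding disjoint_family_on_def
    proof (intro ballI impI)
      fix i j :: "nat \<times> int" assume ij: "i \<noteq> j"
      obtain j1 k1 j2 k2 where i: "i = (j1,k1)" and j: "j = (j2,k2)" by (cases i, cases j) auto
      show "P i \<inter> P j = {}"
      proof (rule ccontr)
        assume "P i \<inter> P j \<noteq> {}"
        then obtain x where x1: "x \<in> P (j1,k1)" and x2: "x \<in> P (j2,k2)" using i j by auto
        show False using key[OF x1] key[OF x2] ij i j ord by auto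
      qed
    qed
    show "B \<subseteq> (\<Union>i. P i)"
    proof
      fix x assume "x \<in> B"
      then have "x \<in> {0<..<a1} \<or> x \<in> {a1<..<a2} \<or> x \<in> {a2<..<1}" using BD unfolding cet_dom_def by auto
      then show "x \<in> (\<Union>i. P i)"
      proof (elim disjE)
        assume "x \<in> {0<..<a1}" then have "x \<in> P (1, floor (c1 - x))" using P1[of x] by simp
        then show ?thesis by blast
      next
        assume "x \<in> {a1<..<a2}" then have "x \<in> P (2, floor (x + c2))" using P2[of x] by simp
        then show ?thesis by blast
      next
        assume "x \<in> {a2<..<1}" then have "x \<in> P (3, floor (x + c3))" using P3[of x] by simp
        then show ?thesis by blast
      qed
    qed
    show "inj_on T B" using inj BD by (rule inj_on_subset)
    show "T x = s i * x + t i" if "x \<in> P i" for i x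
    proof -
      obtain j k where i: "i = (j,k)" by (cases i)
      have "j = 1 \<or> j = 2 \<or> j = 3" using that i Pj by auto
      then show ?thesis
      proof (elim disjE)
        assume "j = 1"
        then have "x \<in> {0<..<a1}" "floor (c1 - x) = k" using that i P1 by auto
        then show ?thesis using h1 i \<open>j = 1\<close> by (simp add: s_def t_def frac_def)
      next
        assume "j = 2"
        then have "x \<in> {a1<..<a2}" "floor (x + c2) = k" using that i P2 by auto
        then show ?thesis using h2 i \<open>j = 2\<close> by (simp add: s_def t_def frac_def)
      next
        assume "j = 3"
        then have "x \<in> {a2<..<1}" "floor (x + c3) = k" using that i P3 by auto
        then show ?thesis using h3 i \<open>j = 3\<close> by (simp add: s_def t_def frac_def)
      qed
    qed
    show "\<bar>s i\<bar> = 1" for i unfolding s_def by (auto split: prod.splits)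
  qed (rule B)
qed

lemma iter_img_0: "iter_img T D 0 J = J"
  unfolding iter_img_def iter_dom_def by simp

lemma iter_img_Suc: "iter_img T D (Suc n) J = T ` (iter_img T D n J \<inter> D)"
  unfolding iter_img_def iter_dom_def by (auto simp: less_Suc_eq image_iff)

lemma inj_iter: "inj_on T D \<Longrightarrow> inj_on (T^^n) (iter_dom T D n)"
proof (induction n)
  case 0 then show ?case by simp
next
  case (Suc n)
  show ?case unfolding inj_on_def
  proof (intro ballI impI)
    fix x y assume x: "x \<in> iter_dom T D (Suc n)" and y: "y \<in> iter_dom T D (Suc n)"
      and e: "(T ^^ Suc n) x = (T ^^ Suc n) y"
    have xs: "x \<in> iter_dom T D n" "(T^^n) x \<in> D" using x unfolding iter_dom_def by auto
    have ys: "y \<in> iter_dom T D n" "(T^^n) y \<in> D" using y unfolding iter_dom_def by auto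
    have "(T^^n) x = (T^^n) y" using e xs ys Suc.prems by (auto simp: inj_on_def)
    then show "x = y" using Suc.IH[OF Suc.prems] xs ys by (auto simp: inj_on_def)
  qed
qed

lemma shift:
  assumes inj: "inj_on T D" and x: "x \<in> J \<inter> iter_dom T D m" and x': "x' \<in> J \<inter> iter_dom T D n"
    and e: "(T^^m) x = (T^^n) x'" and mn: "m \<le> n"
  shows "x \<in> iter_img T D (n - m) J"
proof -
  define z where "z = (T^^(n-m)) x'"
  have "(T^^n) x' = (T^^m) z" unfolding z_def using mn
    by (metis funpow_add le_add_diff_inverse o_apply)
  have zd: "z \<in> iter_dom T D m"
    unfolding iter_dom_def
  proof (intro CollectI allI impI)
    fix k assume "k < m"
    then have "(T^^k) z = (T^^(k + (n - m))) x'" unfolding z_def by (simp add: funpow_add)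
    moreover have "k + (n - m) < n" using \<open>k < m\<close> mn by simp
    ultimately show "(T^^k) z \<in> D" using x' unfolding iter_dom_def by auto
  qed
  have "x = z" using inj_iter[OF inj, of m] x zd e \<open>(T^^n) x' = (T^^m) z\<close>
    by (auto simp: inj_on_def)
  moreover have "x' \<in> J \<inter> iter_dom T D (n - m)" using x' unfolding iter_dom_def by auto
  ultimately show ?thesis unfolding iter_img_def z_def by blast
qed

lemma T_range:
  assumes cet: "cet3_flip1 T a1 a2" and x: "x \<in> cet_dom a1 a2"
  shows "0 \<le> T x \<and> T x < 1"
proof -
  have "\<exists>c1. \<forall>x\<in>{0<..<a1}. T x = frac (c1 - x)" using cet unfolding cet3_flip1_def by auto
  then obtain c1 where h1: "\<forall>x\<in>{0<..<a1}. T x = frac (c1 - x)" by blast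
  have "\<exists>c2. \<forall>x\<in>{a1<..<a2}. T x = frac (x + c2)" using cet unfolding cet3_flip1_def by auto
  then obtain c2 where h2: "\<forall>x\<in>{a1<..<a2}. T x = frac (x + c2)" by blast
  have "\<exists>c3. \<forall>x\<in>{a2<..<1}. T x = frac (x + c3)" using cet unfolding cet3_flip1_def by auto
  then obtain c3 where h3: "\<forall>x\<in>{a2<..<1}. T x = frac (x + c3)" by blast
  show ?thesis using x h1 h2 h3 unfolding cet_dom_def
    by (auto simp: frac_lt_1)
qed

lemma F_props:
  assumes cet: "cet3_flip1 T a1 a2"
  shows "iter_img T (cet_dom a1 a2) n {0<..<a1} \<in> sets lborel
       \<and> emeasure lborel (iter_img T (cet_dom a1 a2) n {0<..<a1}) = ennreal a1
       \<and> iter_img T (cet_dom a1 a2) n {0<..<a1} \<subseteq> {0..<1}"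
proof (induction n)
  have ord: "0 < a1" "a1 < a2" "a2 < 1" using cet unfolding cet3_flip1_def by auto
  case 0 show ?case using ord by (auto simp: iter_img_0)
next
  case (Suc n)
  let ?F = "iter_img T (cet_dom a1 a2) n {0<..<a1}"
  have ord': "0 < a1" "a1 < a2" "a2 < 1" using cet unfolding cet3_flip1_def by auto
  have eq: "?F \<inter> cet_dom a1 a2 = ?F - {0, a1, a2}"
    using Suc.IH ord' unfolding cet_dom_def by auto
  have m: "?F \<inter> cet_dom a1 a2 \<in> sets lborel" unfolding eq using Suc.IH by auto
  have "emeasure lborel (?F \<inter> cet_dom a1 a2) = emeasure lborel ?F"
    unfolding eq by (rule emeasure_Diff_null_set) (use Suc.IH finite_imp_null_set_lborel[of "{0,a1,a2}"] in auto)
  then have "T ` (?F \<inter> cet_dom a1 a2) \<in> sets lborel \<and> emeasure lborel (T ` (?F \<inter> cet_dom a1 a2)) = ennreal a1"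
    using T_meas[OF cet m] Suc.IH by auto
  moreover have "T ` (?F \<inter> cet_dom a1 a2) \<subseteq> {0..<1}" using T_range[OF cet] by auto
  ultimately show ?case by (simp add: iter_img_Suc)
qed

lemma exists_return:
  assumes cet: "cet3_flip1 T a1 a2"
  shows "\<exists>d\<ge>1. iter_img T (cet_dom a1 a2) d {0<..<a1} \<inter> {0<..<a1} \<noteq> {}"
proof (rule ccontr)
  assume H: "\<not> ?thesis"
  define F where "F n = iter_img T (cet_dom a1 a2) n {0<..<a1}" for n
  have ord: "0 < a1" "a1 < a2" "a2 < 1" and inj: "inj_on T (cet_dom a1 a2)"
    using cet unfolding cet3_flip1_def by auto
  have disj0: "F m \<inter> F n = {}" if "m < n" for m n
  proof (rule ccontr)
    assume "F m \<inter> F n \<noteq> {}"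
    then obtain x x' where x: "x \<in> {0<..<a1} \<inter> iter_dom T (cet_dom a1 a2) m"
      and x': "x' \<in> {0<..<a1} \<inter> iter_dom T (cet_dom a1 a2) n"
      and e: "(T^^m) x = (T^^n) x'" unfolding F_def iter_img_def by blast
    have "x \<in> F (n - m)" unfolding F_def using shift[OF inj x x' e] that by simp
    moreover have "n - m \<ge> 1" using that by simp
    ultimately show False using H x unfolding F_def by blast
  qed
  have disj: "disjoint_family_on F {..<K}" for K
    unfolding disjoint_family_on_def
    by (metis disj0 inf_commute linorder_neqE_nat)
  have Fm: "F i \<in> sets lborel" for i using F_props[OF cet] unfolding F_def by auto
  define K where "K = nat \<lceil>2 / a1\<rceil>"
  have K: "real K * a1 \<ge> 2"
  proof -
    have "real K \<ge> 2 / a1" unfolding K_def by linarith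
    then show ?thesis using ord by (simp add: field_simps)
  qed
  have "(\<Sum>i\<in>{..<K}. emeasure lborel (F i)) = emeasure lborel (\<Union>i\<in>{..<K}. F i)"
    by (rule sum_emeasure) (use Fm disj in auto)
  also have "\<dots> \<le> emeasure lborel {0..<(1::real)}"
    by (rule emeasure_mono) (use F_props[OF cet] in \<open>auto simp: F_def\<close>)
  also have "\<dots> = 1" by simp
  finally have "(\<Sum>i\<in>{..<K}. emeasure lborel (F i)) \<le> 1" .
  moreover have "(\<Sum>i\<in>{..<K}. emeasure lborel (F i)) = ennreal (real K * a1)"
    using F_props[OF cet] ord
    by (simp add: F_def ennreal_mult ennreal_of_nat_eq_real_of_nat)
  ultimately have "real K * a1 \<le> 1"
    by (metis ennreal_1 ennreal_le_iff zero_le_one)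
  then show False using K by simp
qed

lemma no_ret1:
  assumes cet: "cet3_flip1 T a1 a2" and np: "\<not> has_periodic_point T (cet_dom a1 a2)"
  shows "iter_img T (cet_dom a1 a2) 1 {0<..<a1} \<inter> {0<..<a1} = {}"
proof (rule ccontr)
  assume "\<not> ?thesis"
  then obtain q where q: "q \<in> {0<..<a1}" and p: "T q \<in> {0<..<a1}"
    unfolding iter_img_def iter_dom_def by force
  have ord: "0 < a1" "a1 < a2" "a2 < 1" using cet unfolding cet3_flip1_def by auto
  have "\<exists>c1. \<forall>x\<in>{0<..<a1}. T x = frac (c1 - x)" using cet unfolding cet3_flip1_def by auto
  then obtain c1 where h1: "\<forall>x\<in>{0<..<a1}. T x = frac (c1 - x)" by blast
  have Tq: "T q = frac (c1 - q)" using h1 q by blast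
  have "T (T q) = frac (c1 - T q)" using h1 p by blast
  also have "c1 - T q = q + of_int \<lfloor>c1 - q\<rfloor>" unfolding Tq by (simp add: frac_def)
  also have "frac (q + of_int \<lfloor>c1 - q\<rfloor>) = q" using q ord by (simp add: frac_eq)
  finally have TT: "(T^^2) q = q" by (simp add: numeral_2_eq_2)
  have "q \<in> iter_dom T (cet_dom a1 a2) 2"
    unfolding iter_dom_def using q p by (auto simp: cet_dom_def less_2_cases_iff)
  then have "has_periodic_point T (cet_dom a1 a2)"
    unfolding has_periodic_point_def using TT by (intro exI[of _ q] exI[of _ 2]) auto
  then show False using np by simp
qed

theorem lemma3p3:
  fixes T :: "real \<Rightarrow> real" and a1 a2 :: real
  assumes "cet3_flip1 T a1 a2"
    and "cyc_sets (T ` {0<..<a1}) (T ` {a2<..<1}) (T ` {a1<..<a2})"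
    and "\<not> has_periodic_point T (cet_dom a1 a2)"
  shows "\<exists>N\<ge>2.
           (\<forall>n\<in>{1..N-1}. iter_img T (cet_dom a1 a2) n {0<..<a1} \<inter> {0<..<a1} = {}) \<and>
           iter_img T (cet_dom a1 a2) N {0<..<a1} \<inter> {0<..<a1} \<noteq> {} \<and>
           (\<forall>m<N. \<forall>n<N. m \<noteq> n \<longrightarrow>
              iter_img T (cet_dom a1 a2) m {0<..<a1} \<inter> iter_img T (cet_dom a1 a2) n {0<..<a1} = {})"
proof -
  define F where "F n = iter_img T (cet_dom a1 a2) n {0<..<a1}" for n
  define Q where "Q n \<longleftrightarrow> 1 \<le> n \<and> F n \<inter> {0<..<a1} \<noteq> {}" for n
  define N where "N = (LEAST n. Q n)"
  have inj: "inj_on T (cet_dom a1 a2)" using assms(1) unfolding cet3_flip1_def by auto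
  have ex: "\<exists>n. Q n" using exists_return[OF assms(1)] unfolding Q_def F_def by auto
  have QN: "Q N" unfolding N_def using ex by (rule LeastI_ex)
  have minN: "\<not> Q n" if "n < N" for n using that unfolding N_def by (rule not_less_Least)
  have "N \<noteq> 1" using QN no_ret1[OF assms(1,3)] unfolding Q_def F_def by auto
  then have N2: "N \<ge> 2" using QN unfolding Q_def by auto
  have A: "\<forall>n\<in>{1..N-1}. F n \<inter> {0<..<a1} = {}"
  proof
    fix n assume "n \<in> {1..N-1}"
    then have "n < N" "1 \<le> n" using N2 by auto
    then show "F n \<inter> {0<..<a1} = {}" using minN[of n] unfolding Q_def by auto
  qed
  have B: "F m \<inter> F n = {}" if "m < n" "n < N" for m n
  proof (rule ccontr)
    assume "F m \<inter> F n \<noteq> {}"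
    then obtain x x' where x: "x \<in> {0<..<a1} \<inter> iter_dom T (cet_dom a1 a2) m"
      and x': "x' \<in> {0<..<a1} \<inter> iter_dom T (cet_dom a1 a2) n"
      and e: "(T^^m) x = (T^^n) x'" unfolding F_def iter_img_def by blast
    have "x \<in> F (n - m)" unfolding F_def using shift[OF inj x x' e] that by simp
    then have "Q (n - m)" unfolding Q_def using x that by auto
    moreover have "n - m < N" using that by simp
    ultimately show False using minN by blast
  qed
  have C: "\<forall>m<N. \<forall>n<N. m \<noteq> n \<longrightarrow> F m \<inter> F n = {}"
    by (metis B inf_commute linorder_neqE_nat)
  show ?thesis using N2 A QN C unfolding Q_def F_def by blast
qed

end
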